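(* Let $n\ge1$ and let $P=(Q,\{a,\varepsilon\},\Sigma,R,\{q_f\},q_{in},a_{in})$ be an order-$n$ HOPDA such that every rule of $R$ whose operation is $\mathrm{push}_n$ or $\mathrm{pop}_n$ has output $\varepsilon$, and whose language is $L(P)=\{$words of runs from $(q_{in},[\cdots[a_{in}]_1\cdots]_n)$ to $(q_f,[\,]_n)\}$, where $[\,]_n$ is the empty order-$n$ stack. Let $\widehat{P}$ be the order-$(n-1)$ HOPDA with tests defined below. Then $\mathrm{Unb}_a(L(P))$ holds if and only if $\mathrm{Unb}_a(L(\widehat{P}))$ holds. Definition of $\widehat{P}$: for $q,q'\in Q$ let $C_{q,q'}$ be the set of order-$(n-1)$ stacks $w$ such that $P$ has a run from $(q,[w]_n)$ to $(q',[\,]_n)$, and $C^a_{q,q'}\subseteq C_{q,q'}$ the set of those $w$ for which such a run exists that outputs at least one $a$; let $\mathrm{True}$ be the set of all order-$(n-1)$ stacks. The control states of $\widehat{P}$ are the pairs $(p_1,p_2)\in Q\times Q$ plus a fresh state $f$; the initial state is $(q_{in},q_f)$, the initial stack is $[\cdots[a_{in}]_1\cdots]_{n-1}$ (just $a_{in}$ if $n=1$), the final states are $\{f\}$, and the rules (written source, top symbol, test, output, operation, target) are: (i) for each $(p_1,b,\gamma,op,p_1')\in R$ with $op\notin\{\mathrm{push}_n,\mathrm{pop}_n\}$ and each $p_2\in Q$: $((p_1,p_2),b,\mathrm{True},\gamma,op,(p_1',p_2))$; (ii) for each $(p_1,b,\varepsilon,\mathrm{pop}_n,p_2)\in R$: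 $((p_1,p_2),b,\mathrm{True},\varepsilon,\mathrm{rew}_b,f)$; (iii) for each $(p_1,b,\varepsilon,\mathrm{push}_n,p_1')\in R$ and all $p,p_2\in Q$: $((p_1,p_2),b,C_{p,p_2},\varepsilon,\mathrm{rew}_b,(p_1',p))$ and $((p_1,p_2),b,C^a_{p,p_2},a,\mathrm{rew}_b,(p_1',p))$; (iv) for each $(p_1,b,\varepsilon,\mathrm{push}_n,p_1')\in R$ and all $p,p_2\in Q$: $((p_1,p_2),b,C_{p_1',p},\varepsilon,\mathrm{rew}_b,(p,p_2))$ and $((p_1,p_2),b,C^a_{p_1',p},a,\mathrm{rew}_b,(p,p_2))$.
   Context: Order-$0$ stacks are elements of a finite alphabet $\Sigma$; an order-$(k+1)$ stack is a finite (possibly empty) sequence $[w_1\dots w_\ell]_{k+1}$ of order-$k$ stacks, $w_1$ topmost. For an order-$n$ stack: $\mathrm{top}_1$ is the topmost symbol; $\mathrm{rew}_b$ replaces the topmost symbol by $b$; $\mathrm{push}_k$ ($1\le k\le n$) replaces the topmost order-$k$ stack $[w_1w_2\dots w_\ell]_k$ by $[w_1w_1w_2\dots w_\ell]_k$; $\mathrm{pop}_k$ replaces it by $[w_2\dots w_\ell]_k$. $\mathrm{Ops}_n$ is the set of these operations for $1\le k\le n$ (only $\mathrm{rew}_b$ when $n=0$). An order-$n$ HOPDA $(Q,\Gamma,\Sigma,R,F,q_{in},a_{in})$ has rules $R\subseteq Q\times\Sigma\times\Gamma\times\mathrm{Ops}_n\times Q$, where $\Gamma$ contains $\varepsilon$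 denoting the empty word; $(q,w)\xrightarrow{\gamma}(q',op(w))$ when $(q,b,\gamma,op,q')\in R$ and $\mathrm{top}_1(w)=b$; a run's word is the concatenation of its outputs. An order-$n$ HOPDA with tests has rules $(q,b,T,\gamma,op,q')$ where $T$ is a set of order-$n$ stacks, and the transition $(q,w)\xrightarrow{\gamma}(q',op(w))$ additionally requires $w\in T$. Unless stated otherwise, $L(\cdot)$ is the set of words of runs from $(q_{in},[\cdots[a_{in}]_1\cdots]_n)$ to a configuration with control state in $F$. $\mathrm{Unb}_a(L)$ holds iff for every $N$ some $w\in L$ contains at least $N$ occurrences of $a$. *)

theory Defs
  imports Main
begin

(* An order-0 stack is a symbol; an order-(k+1) stack is a list of order-k stacks,
   the head of the list being the topmost element. The order is given by wf_stack. *)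
datatype 's stack = Sym 's | Stk "'s stack list"

fun wf_stack :: "'s set \<Rightarrow> nat \<Rightarrow> 's stack \<Rightarrow> bool" where
  "wf_stack S 0 (Sym b) = (b \<in> S)"
| "wf_stack S (Suc k) (Stk ws) = (\<forall>w\<in>set ws. wf_stack S k w)"
| "wf_stack S _ _ = False"

definition init_stack :: "nat \<Rightarrow> 's \<Rightarrow> 's stack" where
  "init_stack n a = ((\<lambda>w. Stk [w]) ^^ n) (Sym a)"

datatype 's op = Rew 's | Push nat | Pop nat

fun top1 :: "'s stack \<Rightarrow> 's option" where
  "top1 (Sym b) = Some b"
| "top1 (Stk []) = None"
| "top1 (Stk (w # ws)) = top1 w"

fun rew_top :: "'s \<Rightarrow> 's stack \<Rightarrow> 's stack option" where
  "rew_top b (Sym _) = Some (Sym b)"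
| "rew_top b (Stk []) = None"
| "rew_top b (Stk (w # ws)) = map_option (\<lambda>w'. Stk (w' # ws)) (rew_top b w)"

fun push_at :: "nat \<Rightarrow> nat \<Rightarrow> 's stack \<Rightarrow> 's stack option" where
  "push_at k m (Stk (w # ws)) =
     (if k = m then Some (Stk (w # w # ws))
      else if k < m then map_option (\<lambda>w'. Stk (w' # ws)) (push_at k (m - 1) w)
      else None)"
| "push_at k m _ = None"

fun pop_at :: "nat \<Rightarrow> nat \<Rightarrow> 's stack \<Rightarrow> 's stack option" where
  "pop_at k m (Stk (w # ws)) =
     (if k = m then Some (Stk ws)
      else if k < m then map_option (\<lambda>w'. Stk (w' # ws)) (pop_at k (m - 1) w)
      else None)"
| "pop_at k m _ = None"

fun apply_op :: "nat \<Rightarrow> 's op \<Rightarrow> 's stack \<Rightarrow> 's stack option" where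
  "apply_op n (Rew b) w = rew_top b w"
| "apply_op n (Push k) w = (if 1 \<le> k \<and> k \<le> n then push_at k n w else None)"
| "apply_op n (Pop k) w = (if 1 \<le> k \<and> k \<le> n then pop_at k n w else None)"

definition Ops :: "nat \<Rightarrow> 's set \<Rightarrow> 's op set" where
  "Ops n S = Rew ` S \<union> {Push k | k. 1 \<le> k \<and> k \<le> n} \<union> {Pop k | k. 1 \<le> k \<and> k \<le> n}"

(* outputs are 'o option; None stands for the empty word epsilon *)
definition out :: "'o option \<Rightarrow> 'o list" where
  "out g = (case g of None \<Rightarrow> [] | Some x \<Rightarrow> [x])"

definition is_hopda ::
  "nat \<Rightarrow> 'q set \<Rightarrow> 'o option set \<Rightarrow> 's set \<Rightarrow> ('q \<times> 's \<times> 'o option \<times> 's op \<times> 'q) set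
   \<Rightarrow> 'q set \<Rightarrow> 'q \<Rightarrow> 's \<Rightarrow> bool" where
  "is_hopda n Q \<Gamma> \<Sigma> R F qin ain \<longleftrightarrow>
     finite Q \<and> finite \<Gamma> \<and> finite \<Sigma> \<and> None \<in> \<Gamma> \<and>
     R \<subseteq> Q \<times> \<Sigma> \<times> \<Gamma> \<times> Ops n \<Sigma> \<times> Q \<and> F \<subseteq> Q \<and> qin \<in> Q \<and> ain \<in> \<Sigma>"

inductive hrun :: "nat \<Rightarrow> ('q \<times> 's \<times> 'o option \<times> 's op \<times> 'q) set
    \<Rightarrow> 'q \<times> 's stack \<Rightarrow> 'o list \<Rightarrow> 'q \<times> 's stack \<Rightarrow> bool"
  for n R where
  hrun_refl: "hrun n R c [] c"
| hrun_step: "\<lbrakk>(q, b, g, opr, q') \<in> R; top1 w = Some b; apply_op n opr w = Some w';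
               hrun n R (q', w') u c\<rbrakk> \<Longrightarrow> hrun n R (q, w) (out g @ u) c"

inductive trun :: "nat \<Rightarrow> ('q \<times> 's \<times> 's stack set \<times> 'o option \<times> 's op \<times> 'q) set
    \<Rightarrow> 'q \<times> 's stack \<Rightarrow> 'o list \<Rightarrow> 'q \<times> 's stack \<Rightarrow> bool"
  for n R where
  trun_refl: "trun n R c [] c"
| trun_step: "\<lbrakk>(q, b, T, g, opr, q') \<in> R; top1 w = Some b; w \<in> T; apply_op n opr w = Some w';
               trun n R (q', w') u c\<rbrakk> \<Longrightarrow> trun n R (q, w) (out g @ u) c"

definition Unb :: "'o \<Rightarrow> 'o list set \<Rightarrow> bool" where
  "Unb a L \<longleftrightarrow> (\<forall>N. \<exists>w\<in>L. count_list w a \<ge> N)"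

definition Cset :: "nat \<Rightarrow> 's set \<Rightarrow> ('q \<times> 's \<times> 'o option \<times> 's op \<times> 'q) set
    \<Rightarrow> 'q \<Rightarrow> 'q \<Rightarrow> 's stack set" where
  "Cset n \<Sigma> R q q' = {w. wf_stack \<Sigma> (n - 1) w \<and> (\<exists>u. hrun n R (q, Stk [w]) u (q', Stk []))}"

definition Caset :: "nat \<Rightarrow> 's set \<Rightarrow> ('q \<times> 's \<times> 'o option \<times> 's op \<times> 'q) set
    \<Rightarrow> 'o \<Rightarrow> 'q \<Rightarrow> 'q \<Rightarrow> 's stack set" where
  "Caset n \<Sigma> R a q q' = {w. wf_stack \<Sigma> (n - 1) w \<and> (\<exists>u. hrun n R (q, Stk [w]) u (q', Stk []) \<and> a \<in> set u)}"

definition TrueSet :: "nat \<Rightarrow> 's set \<Rightarrow> 's stack set" where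
  "TrueSet n \<Sigma> = {w. wf_stack \<Sigma> (n - 1) w}"

(* control states of P-hat: Some (p1,p2) for pairs, None for the fresh state f *)
definition hat_rules :: "nat \<Rightarrow> 'q set \<Rightarrow> 's set \<Rightarrow> ('q \<times> 's \<times> 'o option \<times> 's op \<times> 'q) set \<Rightarrow> 'o
    \<Rightarrow> (('q \<times> 'q) option \<times> 's \<times> 's stack set \<times> 'o option \<times> 's op \<times> ('q \<times> 'q) option) set" where
  "hat_rules n Q \<Sigma> R a =
     {(Some (p1, p2), b, TrueSet n \<Sigma>, g, opr, Some (p1', p2)) | p1 b g opr p1' p2.
        (p1, b, g, opr, p1') \<in> R \<and> opr \<notin> {Push n, Pop n} \<and> p2 \<in> Q}
   \<union> {(Some (p1, p2), b, TrueSet n \<Sigma>, None, Rew b, None) | p1 b p2.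
        (p1, b, None, Pop n, p2) \<in> R}
   \<union> {(Some (p1, p2), b, Cset n \<Sigma> R p p2, None, Rew b, Some (p1', p)) | p1 b p1' p p2.
        (p1, b, None, Push n, p1') \<in> R \<and> p \<in> Q \<and> p2 \<in> Q}
   \<union> {(Some (p1, p2), b, Caset n \<Sigma> R a p p2, Some a, Rew b, Some (p1', p)) | p1 b p1' p p2.
        (p1, b, None, Push n, p1') \<in> R \<and> p \<in> Q \<and> p2 \<in> Q}
   \<union> {(Some (p1, p2), b, Cset n \<Sigma> R p1' p, None, Rew b, Some (p, p2)) | p1 b p1' p p2.
        (p1, b, None, Push n, p1') \<in> R \<and> p \<in> Q \<and> p2 \<in> Q}
   \<union> {(Some (p1, p2), b, Caset n \<Sigma> R a p1' p, Some a, Rew b, Some (p, p2)) | p1 b p1' p p2.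
        (p1, b, None, Push n, p1') \<in> R \<and> p \<in> Q \<and> p2 \<in> Q}"

definition lang_P :: "nat \<Rightarrow> ('q \<times> 's \<times> 'o option \<times> 's op \<times> 'q) set \<Rightarrow> 'q \<Rightarrow> 's \<Rightarrow> 'q \<Rightarrow> 'o list set" where
  "lang_P n R qin ain qf = {u. hrun n R (qin, init_stack n ain) u (qf, Stk [])}"

definition lang_hat :: "nat \<Rightarrow> 'q set \<Rightarrow> 's set \<Rightarrow> ('q \<times> 's \<times> 'o option \<times> 's op \<times> 'q) set \<Rightarrow> 'o
    \<Rightarrow> 'q \<Rightarrow> 's \<Rightarrow> 'q \<Rightarrow> 'o list set" where
  "lang_hat n Q \<Sigma> R a qin ain qf =
     {u. \<exists>w. trun (n - 1) (hat_rules n Q \<Sigma> R a) (Some (qin, qf), init_stack (n - 1) ain) u (None, w)}"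

end

theory Submission
  imports Defs
begin

inductive hrunk :: "nat \<Rightarrow> ('q \<times> 's \<times> 'o option \<times> 's op \<times> 'q) set
    \<Rightarrow> nat \<Rightarrow> 'q \<times> 's stack \<Rightarrow> 'o list \<Rightarrow> 'q \<times> 's stack \<Rightarrow> bool"
  for n R where
  hrunk_refl: "hrunk n R 0 c [] c"
| hrunk_step: "\<lbrakk>(q, b, g, opr, q') \<in> R; top1 w = Some b; apply_op n opr w = Some w';
               hrunk n R k (q', w') u c\<rbrakk> \<Longrightarrow> hrunk n R (Suc k) (q, w) (out g @ u) c"

lemma hrun_hrunk: "hrun n R c u c' \<Longrightarrow> \<exists>k. hrunk n R k c u c'"
  by (induction rule: hrun.induct) (auto intro: hrunk.intros)

lemma hrunk_hrun: "hrunk n R k c u c' \<Longrightarrow> hrun n R c u c'"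
  by (induction rule: hrunk.induct) (auto intro: hrun.intros)

lemma hrunk_trans: "hrunk n R k1 c u c' \<Longrightarrow> hrunk n R k2 c' v c'' \<Longrightarrow> hrunk n R (k1+k2) c (u@v) c''"
  by (induction rule: hrunk.induct) (auto intro: hrunk.intros)

lemma hrun_trans: "hrun n R c u c' \<Longrightarrow> hrun n R c' v c'' \<Longrightarrow> hrun n R c (u@v) c''"
  by (induction rule: hrun.induct) (auto intro: hrun.intros)

lemma op_stk:
  assumes "top1 (Stk xs) = Some b" "apply_op n opr (Stk xs) = Some W" "1 \<le> n"
  shows "\<exists>xs'. W = Stk xs' \<and> apply_op n opr (Stk (xs@ys)) = Some (Stk (xs'@ys))"
proof (cases xs)
  case Nil then show ?thesis using assms by simp
next
  case (Cons x xt)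
  then show ?thesis using assms by (cases opr) (auto split: if_splits)
qed

lemma top1_app: "top1 (Stk xs) = Some b \<Longrightarrow> top1 (Stk (xs@ys)) = Some b"
  by (cases xs) auto

lemma hrunk_lift:
  assumes "hrunk n R k c u c'" "c = (q, Stk xs)" "c' = (q', Stk xs')" "1 \<le> n"
  shows "hrunk n R k (q, Stk (xs@ys)) u (q', Stk (xs'@ys))"
  using assms
proof (induction arbitrary: q xs rule: hrunk.induct)
  case (hrunk_refl c)
  then show ?case by (auto intro: hrunk.intros)
next
  case (hrunk_step q0 b g opr q1 w w' k u c)
  then obtain xs'' where "w' = Stk xs''" "apply_op n opr (Stk (xs@ys)) = Some (Stk (xs''@ys))"
    using op_stk[of xs b n opr w' ys] by auto
  moreover have "top1 (Stk (xs@ys)) = Some b" using hrunk_step top1_app by auto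
  ultimately show ?case using hrunk_step by (auto intro: hrunk.intros)
qed

lemma hrun_lift:
  assumes "hrun n R (q, Stk xs) u (q', Stk xs')" "1 \<le> n"
  shows "hrun n R (q, Stk (xs@ys)) u (q', Stk (xs'@ys))"
  using assms hrun_hrunk hrunk_hrun hrunk_lift by metis

lemma op_low:
  assumes "1 \<le> n" "opr \<notin> {Push n, Pop n}"
  shows "apply_op n opr (Stk (w#ys)) = map_option (\<lambda>w'. Stk (w'#ys)) (apply_op (n-1) opr w)"
  using assms by (cases opr) auto

lemma rew_same: "top1 w = Some b \<Longrightarrow> rew_top b w = Some w"
  by (induction w rule: top1.induct) auto

lemma hrunk_empty: "hrunk n R k (q, Stk []) u c \<Longrightarrow> k = 0 \<and> u = [] \<and> c = (q, Stk [])"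
  by (erule hrunk.cases) auto

lemma hrunk_0: "hrunk n R 0 c u c' \<Longrightarrow> c' = c \<and> u = []"
  by (erule hrunk.cases) auto

lemma wf_rew: "wf_stack S m w \<Longrightarrow> rew_top b w = Some w' \<Longrightarrow> b \<in> S \<Longrightarrow> wf_stack S m w'"
proof (induction b w arbitrary: m w' rule: rew_top.induct)
  case (1 b uu) then show ?case by (cases m) auto
next
  case (2 b) then show ?case by simp
next
  case (3 b w ws) then show ?case by (cases m) auto
qed

lemma wf_push: "wf_stack S m w \<Longrightarrow> push_at k m w = Some w' \<Longrightarrow> wf_stack S m w'"
proof (induction k m w arbitrary: w' rule: push_at.induct)
  case (1 k m w ws) then show ?case by (cases m) (auto split: if_splits)
qed auto

lemma wf_pop: "wf_stack S m w \<Longrightarrow> pop_at k m w = Some w' \<Longrightarrow> wf_stack S m w'"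
proof (induction k m w arbitrary: w' rule: pop_at.induct)
  case (1 k m w ws) then show ?case by (cases m) (auto split: if_splits)
qed auto

lemma wf_op: "wf_stack S m w \<Longrightarrow> apply_op m opr w = Some w' \<Longrightarrow> opr \<in> Ops n S \<Longrightarrow> wf_stack S m w'"
  by (cases opr) (auto simp: Ops_def split: if_splits intro: wf_rew wf_push wf_pop)

lemma wf_init: "a \<in> S \<Longrightarrow> wf_stack S m (init_stack m a)"
  by (induction m) (auto simp: init_stack_def)

lemma init_Suc: "init_stack (Suc m) a = Stk [init_stack m a]"
  by (simp add: init_stack_def)


lemma split_run:
  assumes "hrunk n R k (q, Stk (w#ys)) u (q', Stk zs)" "length zs \<le> length ys" "1 \<le> n"
  shows "\<exists>p u1 u2 k1 k2. hrunk n R k1 (q, Stk [w]) u1 (p, Stk []) \<and> hrunk n R k2 (p, Stk ys) u2 (q', Stk zs)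
           \<and> u = u1 @ u2 \<and> k = k1 + k2 \<and> 0 < k1"
  using assms
proof (induction k arbitrary: q w ys u rule: less_induct)
  case (less k)
  from less.prems(1) show ?case
  proof (cases rule: hrunk.cases)
    case hrunk_refl
    then show ?thesis using less.prems by auto
  next
    case (hrunk_step b g opr q1 W' k0 u0)
    have tw: "top1 w = Some b" using hrunk_step by simp
    consider (po) "opr = Pop n" | (pu) "opr = Push n" | (lo) "opr \<notin> {Push n, Pop n}" by blast
    then show ?thesis
    proof cases
      case po
      then have "W' = Stk ys" using hrunk_step less.prems by simp
      have "hrunk n R (Suc 0) (q, Stk [w]) (out g @ []) (q1, Stk [])"
        using hrunk_step po tw less.prems by (intro hrunk.intros(2)[of q b g opr q1]) (auto intro: hrunk.intros)
      then show ?thesis using hrunk_step \<open>W' = Stk ys\<close> by fastforce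
    next
      case pu
      then have W: "W' = Stk (w#w#ys)" using hrunk_step less.prems by simp
      obtain p u1 u2 k1 k2 where A: "hrunk n R k1 (q1, Stk [w]) u1 (p, Stk [])"
        "hrunk n R k2 (p, Stk (w#ys)) u2 (q', Stk zs)" "u0 = u1 @ u2" "k0 = k1 + k2" "0 < k1"
        using less.IH[of k0 q1 w "w#ys" u0] hrunk_step W less.prems by auto
      obtain p' u3 u4 k3 k4 where B: "hrunk n R k3 (p, Stk [w]) u3 (p', Stk [])"
        "hrunk n R k4 (p', Stk ys) u4 (q', Stk zs)" "u2 = u3 @ u4" "k2 = k3 + k4" "0 < k3"
        using less.IH[of k2 p w ys u2] A hrunk_step less.prems by auto
      have L: "hrunk n R k1 (q1, Stk [w,w]) u1 (p, Stk [w])"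
        using hrunk_lift[OF A(1) refl refl less.prems(3), of "[w]"] by simp
      have "hrunk n R (Suc k1) (q, Stk [w]) (out g @ u1) (p, Stk [w])"
        using hrunk_step pu tw less.prems L by (intro hrunk.intros(2)[of q b g opr q1]) auto
      from hrunk_trans[OF this B(1)]
      have "hrunk n R (Suc k1 + k3) (q, Stk [w]) (out g @ u1 @ u3) (p', Stk [])" by simp
      then show ?thesis using B A hrunk_step
        by (intro exI[of _ p'] exI[of _ "out g @ u1 @ u3"] exI[of _ u4] exI[of _ "Suc k1 + k3"] exI[of _ k4]) auto
    next
      case lo
      obtain w' where w': "apply_op (n-1) opr w = Some w'" "W' = Stk (w'#ys)"
        using hrunk_step op_low[OF less.prems(3) lo, of w ys] by auto
      obtain p u1 u2 k1 k2 where A: "hrunk n R k1 (q1, Stk [w']) u1 (p, Stk [])"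
        "hrunk n R k2 (p, Stk ys) u2 (q', Stk zs)" "u0 = u1 @ u2" "k0 = k1 + k2" "0 < k1"
        using less.IH[of k0 q1 w' ys u0] hrunk_step w' less.prems by auto
      have "apply_op n opr (Stk [w]) = Some (Stk [w'])"
        using op_low[OF less.prems(3) lo, of w "[]"] w' by simp
      then have "hrunk n R (Suc k1) (q, Stk [w]) (out g @ u1) (p, Stk [])"
        using hrunk_step tw A by (intro hrunk.intros(2)[of q b g opr q1]) auto
      then show ?thesis using A hrunk_step by fastforce
    qed
  qed
qed


lemma count_out: "count_list (out g) x \<le> 1"
  by (cases g) (auto simp: out_def)

context
  fixes n :: nat and Q :: "'q set" and \<Sigma> :: "'s set" and a :: 'o
    and R :: "('q \<times> 's \<times> 'o option \<times> 's op \<times> 'q) set"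
  assumes n1: "1 \<le> n"
    and RQ: "\<And>p b g opr p'. (p, b, g, opr, p') \<in> R \<Longrightarrow> p' \<in> Q \<and> b \<in> \<Sigma> \<and> opr \<in> Ops n \<Sigma>"
    and eps: "\<And>p b g opr p'. (p, b, g, opr, p') \<in> R \<Longrightarrow> opr \<in> {Push n, Pop n} \<Longrightarrow> g = None"
begin

lemma end_Q: "hrunk n R k c u c' \<Longrightarrow> 0 < k \<Longrightarrow> fst c' \<in> Q"
proof (induction rule: hrunk.induct)
  case (hrunk_step q b g opr q' w w' k u c)
  show ?case
  proof (cases k)
    case 0 then show ?thesis using hrunk_step hrunk_0 RQ by fastforce
  next
    case (Suc k') then show ?thesis using hrunk_step by simp
  qed
qed simp

lemma trun_None: "trun m (hat_rules n Q \<Sigma> R a) (None, w) u c \<Longrightarrow> u = []"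
  by (erule trun.cases) (auto simp: hat_rules_def)

lemma hat_to_P:
  assumes "trun (n-1) (hat_rules n Q \<Sigma> R a) c u c'" "fst c' = None" "fst c = Some (p1, p2)"
  shows "\<exists>u'. hrun n R (p1, Stk [snd c]) u' (p2, Stk []) \<and> count_list u a \<le> count_list u' a"
  using assms
proof (induction arbitrary: p1 p2 rule: trun.induct)
  case (trun_refl c)
  then show ?case by simp
next
  case (trun_step q b T g opr q' w w' u c)
  have q: "q = Some (p1, p2)" using trun_step by simp
  have mem: "(Some (p1, p2), b, T, g, opr, q') \<in> hat_rules n Q \<Sigma> R a" using trun_step q by simp
  have tw: "top1 (Stk [w]) = Some b" using trun_step by simp
  from mem consider
    (i) p1' where "T = TrueSet n \<Sigma>" "q' = Some (p1', p2)" "(p1, b, g, opr, p1') \<in> R" "opr \<notin> {Push n, Pop n}"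
  | (ii) "g = None" "opr = Rew b" "q' = None" "(p1, b, None, Pop n, p2) \<in> R"
  | (iii) p1' p where "T = Cset n \<Sigma> R p p2" "g = None" "opr = Rew b" "q' = Some (p1', p)" "(p1, b, None, Push n, p1') \<in> R"
  | (iiia) p1' p where "T = Caset n \<Sigma> R a p p2" "g = Some a" "opr = Rew b" "q' = Some (p1', p)" "(p1, b, None, Push n, p1') \<in> R"
  | (iv) p1' p where "T = Cset n \<Sigma> R p1' p" "g = None" "opr = Rew b" "q' = Some (p, p2)" "(p1, b, None, Push n, p1') \<in> R"
  | (iva) p1' p where "T = Caset n \<Sigma> R a p1' p" "g = Some a" "opr = Rew b" "q' = Some (p, p2)" "(p1, b, None, Push n, p1') \<in> R"
    unfolding hat_rules_def by blast
  then show ?case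
  proof cases
    case (i p1')
    obtain u'' where U: "hrun n R (p1', Stk [w']) u'' (p2, Stk [])" "count_list u a \<le> count_list u'' a"
      using trun_step i by auto
    have "apply_op n opr (Stk [w]) = Some (Stk [w'])"
      using op_low[OF n1 i(4), of w "[]"] trun_step by simp
    then have "hrun n R (p1, Stk [w]) (out g @ u'') (p2, Stk [])"
      using i U tw by (intro hrun.intros(2)) auto
    then show ?thesis using U by auto
  next
    case ii
    have "u = []" using trun_None trun_step ii by blast
    have "apply_op n (Pop n) (Stk [w]) = Some (Stk [])" using n1 by simp
    then have "hrun n R (p1, Stk [w]) (out None @ []) (p2, Stk [])"
      using ii tw by (intro hrun.intros(2)) (auto intro: hrun.intros)
    then show ?thesis using \<open>u = []\<close> ii by auto
  next
    case (iii p1' p)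
    have ww: "w' = w" using trun_step iii rew_same by fastforce
    obtain v where V: "hrun n R (p, Stk [w]) v (p2, Stk [])" using trun_step iii by (auto simp: Cset_def)
    obtain u'' where U: "hrun n R (p1', Stk [w]) u'' (p, Stk [])" "count_list u a \<le> count_list u'' a"
      using trun_step iii ww by auto
    have L: "hrun n R (p1', Stk [w,w]) u'' (p, Stk [w])" using hrun_lift[OF U(1) n1, of "[w]"] by simp
    have "apply_op n (Push n) (Stk [w]) = Some (Stk [w,w])" using n1 by simp
    then have "hrun n R (p1, Stk [w]) (out None @ u'') (p, Stk [w])"
      using iii tw L by (intro hrun.intros(2)) auto
    from hrun_trans[OF this V] show ?thesis using U iii by (auto simp: out_def intro!: exI[of _ "u'' @ v"])
  next
    case (iiia p1' p)
    have ww: "w' = w" using trun_step iiia rew_same by fastforce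
    obtain v where V: "hrun n R (p, Stk [w]) v (p2, Stk [])" "a \<in> set v" using trun_step iiia by (auto simp: Caset_def)
    obtain u'' where U: "hrun n R (p1', Stk [w]) u'' (p, Stk [])" "count_list u a \<le> count_list u'' a"
      using trun_step iiia ww by auto
    have L: "hrun n R (p1', Stk [w,w]) u'' (p, Stk [w])" using hrun_lift[OF U(1) n1, of "[w]"] by simp
    have "apply_op n (Push n) (Stk [w]) = Some (Stk [w,w])" using n1 by simp
    then have "hrun n R (p1, Stk [w]) (out None @ u'') (p, Stk [w])"
      using iiia tw L by (intro hrun.intros(2)) auto
    moreover have "count_list v a \<noteq> 0" using V(2) count_list_0_iff by metis
    ultimately show ?thesis using hrun_trans V U iiia by (auto simp: out_def intro!: exI[of _ "u'' @ v"])
  next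
    case (iv p1' p)
    have ww: "w' = w" using trun_step iv rew_same by fastforce
    obtain v where V: "hrun n R (p1', Stk [w]) v (p, Stk [])" using trun_step iv by (auto simp: Cset_def)
    obtain u'' where U: "hrun n R (p, Stk [w]) u'' (p2, Stk [])" "count_list u a \<le> count_list u'' a"
      using trun_step iv ww by auto
    have L: "hrun n R (p1', Stk [w,w]) v (p, Stk [w])" using hrun_lift[OF V(1) n1, of "[w]"] by simp
    have "apply_op n (Push n) (Stk [w]) = Some (Stk [w,w])" using n1 by simp
    then have "hrun n R (p1, Stk [w]) (out None @ v) (p, Stk [w])"
      using iv tw L by (intro hrun.intros(2)) auto
    from hrun_trans[OF this U(1)] show ?thesis using U iv by (auto simp: out_def intro!: exI[of _ "v @ u''"])
  next
    case (iva p1' p)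
    have ww: "w' = w" using trun_step iva rew_same by fastforce
    obtain v where V: "hrun n R (p1', Stk [w]) v (p, Stk [])" "a \<in> set v" using trun_step iva by (auto simp: Caset_def)
    obtain u'' where U: "hrun n R (p, Stk [w]) u'' (p2, Stk [])" "count_list u a \<le> count_list u'' a"
      using trun_step iva ww by auto
    have L: "hrun n R (p1', Stk [w,w]) v (p, Stk [w])" using hrun_lift[OF V(1) n1, of "[w]"] by simp
    have "apply_op n (Push n) (Stk [w]) = Some (Stk [w,w])" using n1 by simp
    then have "hrun n R (p1, Stk [w]) (out None @ v) (p, Stk [w])"
      using iva tw L by (intro hrun.intros(2)) auto
    moreover have "count_list v a \<noteq> 0" using V(2) count_list_0_iff by metis
    ultimately show ?thesis using hrun_trans U iva by (auto simp: out_def intro!: exI[of _ "v @ u''"])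
  qed
qed


lemma P_to_hat:
  assumes "hrunk n R k (p1, Stk [w]) u (p2, Stk [])" "wf_stack \<Sigma> (n-1) w"
  shows "\<exists>u' w2. trun (n-1) (hat_rules n Q \<Sigma> R a) (Some (p1, p2), w) u' (None, w2)
            \<and> count_list u a < 2 ^ count_list u' a"
  using assms
proof (induction k arbitrary: p1 p2 w u rule: less_induct)
  case (less k)
  have kz: "k \<noteq> 0"
  proof
    assume "k = 0"
    then show False using less.prems(1) hrunk_0[of n R "(p1, Stk [w])" u "(p2, Stk [])"] by simp
  qed
  have p2Q: "p2 \<in> Q" using end_Q[OF less.prems(1)] kz by simp
  obtain kk where kk: "k = Suc kk" using kz by (cases k) auto
  from less.prems(1)[unfolded kk] show ?case
  proof (cases rule: hrunk.cases)
    case (hrunk_step b g opr q1 W' u0)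
    have tw: "top1 w = Some b" using hrunk_step by simp
    have RR: "q1 \<in> Q" "b \<in> \<Sigma>" "opr \<in> Ops n \<Sigma>" using RQ hrunk_step(2) by auto
    consider (po) "opr = Pop n" | (pu) "opr = Push n" | (lo) "opr \<notin> {Push n, Pop n}" by blast
    then show ?thesis
    proof cases
      case po
      then have "W' = Stk []" using hrunk_step n1 by simp
      then have E: "kk = 0" "u0 = []" "q1 = p2" using hrunk_empty hrunk_step by fastforce+
      have g: "g = None" using eps hrunk_step po by auto
      have mem: "(Some (p1, p2), b, TrueSet n \<Sigma>, None, Rew b, None) \<in> hat_rules n Q \<Sigma> R a"
      proof -
        have "(p1, b, None, Pop n, p2) \<in> R" using hrunk_step po E g by simp
        then show ?thesis by (simp add: hat_rules_def; blast)
      qed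
      have "trun (n-1) (hat_rules n Q \<Sigma> R a) (Some (p1, p2), w) (out None @ []) (None, w)"
        using mem tw less.prems(2) rew_same[OF tw]
        by (intro trun.intros(2)[OF mem]) (auto simp: TrueSet_def intro: trun.intros)
      then show ?thesis using hrunk_step E g by (auto simp: out_def)
    next
      case pu
      then have W: "W' = Stk [w,w]" using hrunk_step n1 by simp
      have g: "g = None" using eps hrunk_step pu by auto
      obtain p u1 u2 k1 k2 where A: "hrunk n R k1 (q1, Stk [w]) u1 (p, Stk [])"
        "hrunk n R k2 (p, Stk [w]) u2 (p2, Stk [])" "u0 = u1 @ u2" "kk = k1 + k2" "0 < k1"
        using split_run[of n R kk q1 w "[w]" u0 p2 "[]"] hrunk_step W n1 by auto
      have k2: "0 < k2" using A(2) hrunk_0 by (cases k2) fastforce+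
      have pQ: "p \<in> Q" using end_Q[OF A(1)] A(5) by simp
      obtain h1 x1 where H1: "trun (n-1) (hat_rules n Q \<Sigma> R a) (Some (q1, p), w) h1 (None, x1)"
        "count_list u1 a < 2 ^ count_list h1 a"
        using less.IH[of k1 q1 w u1 p] A less.prems hrunk_step k2 kk by auto
      obtain h2 x2 where H2: "trun (n-1) (hat_rules n Q \<Sigma> R a) (Some (p, p2), w) h2 (None, x2)"
        "count_list u2 a < 2 ^ count_list h2 a"
        using less.IH[of k2 p w u2 p2] A less.prems hrunk_step kk by auto
      have r: "(p1, b, None, Push n, q1) \<in> R" using hrunk_step pu g by simp
      have rw: "apply_op (n-1) (Rew b) w = Some w" using rew_same[OF tw] by simp
      have C1: "w \<in> Cset n \<Sigma> R q1 p" using hrunk_hrun[OF A(1)] less.prems(2) by (auto simp: Cset_def)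
      have C2: "w \<in> Cset n \<Sigma> R p p2" using hrunk_hrun[OF A(2)] less.prems(2) by (auto simp: Cset_def)
      have uu: "u = u1 @ u2" using hrunk_step A g by (simp add: out_def)
      show ?thesis
      proof (cases "count_list u2 a = 0")
        case True
        have mem: "(Some (p1, p2), b, Cset n \<Sigma> R p p2, None, Rew b, Some (q1, p)) \<in> hat_rules n Q \<Sigma> R a"
          using r pQ p2Q by (simp add: hat_rules_def; blast)
        have "trun (n-1) (hat_rules n Q \<Sigma> R a) (Some (p1, p2), w) (out None @ h1) (None, x1)"
          using tw C2 rw H1 by (intro trun.intros(2)[OF mem]) auto
        then show ?thesis using H1 True uu by (auto simp: out_def)
      next
        case F2: False
        show ?thesis
        proof (cases "count_list u1 a = 0")
          case True
          have mem: "(Some (p1, p2), b, Cset n \<Sigma> R q1 p, None, Rew b, Some (p, p2)) \<in> hat_rules n Q \<Sigma> R a"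
            using r pQ p2Q by (simp add: hat_rules_def; blast)
          have "trun (n-1) (hat_rules n Q \<Sigma> R a) (Some (p1, p2), w) (out None @ h2) (None, x2)"
            using tw C1 rw H2 by (intro trun.intros(2)[OF mem]) auto
          then show ?thesis using H2 True uu by (auto simp: out_def)
        next
          case F1: False
          have Ca1: "w \<in> Caset n \<Sigma> R a q1 p" proof -
            have "a \<in> set u1" using F1 count_notin by metis
            then show ?thesis using hrunk_hrun[OF A(1)] less.prems(2) unfolding Caset_def by blast
          qed
          have Ca2: "w \<in> Caset n \<Sigma> R a p p2" proof -
            have "a \<in> set u2" using F2 count_notin by metis
            then show ?thesis using hrunk_hrun[OF A(2)] less.prems(2) unfolding Caset_def by blast
          qed
          show ?thesis
          proof (cases "count_list h2 a \<le> count_list h1 a")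
            case True
            have mem: "(Some (p1, p2), b, Caset n \<Sigma> R a p p2, Some a, Rew b, Some (q1, p)) \<in> hat_rules n Q \<Sigma> R a"
              using r pQ p2Q by (simp add: hat_rules_def; blast)
            have "trun (n-1) (hat_rules n Q \<Sigma> R a) (Some (p1, p2), w) (out (Some a) @ h1) (None, x1)"
              using tw Ca2 rw H1 by (intro trun.intros(2)[OF mem]) auto
            moreover have "(2::nat) ^ count_list h2 a \<le> 2 ^ count_list h1 a"
              using True by (simp add: power_increasing)
            then have "count_list u1 a + count_list u2 a < 2 * 2 ^ count_list h1 a"
              using H1(2) H2(2) by linarith
            ultimately show ?thesis using H1 H2 uu by (auto simp: out_def intro!: exI[of _ "a # h1"])
          next
            case False
            have mem: "(Some (p1, p2), b, Caset n \<Sigma> R a q1 p, Some a, Rew b, Some (p, p2)) \<in> hat_rules n Q \<Sigma> R a"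
              using r pQ p2Q by (simp add: hat_rules_def; blast)
            have "trun (n-1) (hat_rules n Q \<Sigma> R a) (Some (p1, p2), w) (out (Some a) @ h2) (None, x2)"
              using tw Ca1 rw H2 by (intro trun.intros(2)[OF mem]) auto
            moreover have "(2::nat) ^ count_list h1 a \<le> 2 ^ count_list h2 a"
              using False by (simp add: power_increasing)
            then have "count_list u1 a + count_list u2 a < 2 * 2 ^ count_list h2 a"
              using H1(2) H2(2) by linarith
            ultimately show ?thesis using H1 H2 uu by (auto simp: out_def intro!: exI[of _ "a # h2"])
          qed
        qed
      qed
    next
      case lo
      obtain w' where w': "apply_op (n-1) opr w = Some w'" "W' = Stk [w']"
        using hrunk_step op_low[OF n1 lo, of w "[]"] by auto
      have wf': "wf_stack \<Sigma> (n-1) w'" using wf_op[OF less.prems(2) w'(1) RR(3)] .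
      obtain h x where H: "trun (n-1) (hat_rules n Q \<Sigma> R a) (Some (q1, p2), w') h (None, x)"
        "count_list u0 a < 2 ^ count_list h a"
        using less.IH[of kk q1 w' u0 p2] hrunk_step w' wf' kk by auto
      have mem: "(Some (p1, p2), b, TrueSet n \<Sigma>, g, opr, Some (q1, p2)) \<in> hat_rules n Q \<Sigma> R a"
        using hrunk_step lo p2Q by (simp add: hat_rules_def; blast)
      have T: "trun (n-1) (hat_rules n Q \<Sigma> R a) (Some (p1, p2), w) (out g @ h) (None, x)"
        using tw less.prems(2) w' H by (intro trun.intros(2)[OF mem]) (auto simp: TrueSet_def)
      have "count_list (out g) a + count_list u0 a < 2 ^ (count_list (out g) a + count_list h a)"
      proof (cases "count_list (out g) a = 0")
        case True then show ?thesis using H by simp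
      next
        case False
        then have "count_list (out g) a = 1" using count_out[of g a] by simp
        then show ?thesis using H by simp
      qed
      then show ?thesis using T hrunk_step by auto
    qed
  qed
qed

end


theorem mainTheorem5:
  fixes n :: nat and Q :: "'q set" and \<Sigma> :: "'s set" and a :: 'o
    and R :: "('q \<times> 's \<times> 'o option \<times> 's op \<times> 'q) set"
    and qin qf :: 'q and ain :: 's
  assumes "n \<ge> 1"
    and "is_hopda n Q {None, Some a} \<Sigma> R {qf} qin ain"
    and "\<And>p b g opr p'. (p, b, g, opr, p') \<in> R \<Longrightarrow> opr \<in> {Push n, Pop n} \<Longrightarrow> g = None"
  shows "Unb a (lang_P n R qin ain qf) \<longleftrightarrow> Unb a (lang_hat n Q \<Sigma> R a qin ain qf)"
proof -
  have n1: "1 \<le> n" using assms(1) .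
  have hop: "R \<subseteq> Q \<times> \<Sigma> \<times> {None, Some a} \<times> Ops n \<Sigma> \<times> Q" "ain \<in> \<Sigma>"
    using assms(2) unfolding is_hopda_def by blast+
  have RQ: "\<And>p b g opr p'. (p, b, g, opr, p') \<in> R \<Longrightarrow> p' \<in> Q \<and> b \<in> \<Sigma> \<and> opr \<in> Ops n \<Sigma>"
  proof -
    fix p b g opr p'
    assume "(p, b, g, opr, p') \<in> R"
    then have "(p, b, g, opr, p') \<in> Q \<times> \<Sigma> \<times> {None, Some a} \<times> Ops n \<Sigma> \<times> Q"
      using hop(1) by (rule subsetD[rotated])
    then show "p' \<in> Q \<and> b \<in> \<Sigma> \<and> opr \<in> Ops n \<Sigma>" by simp
  qed
  obtain m where nm: "n = Suc m" using n1 by (cases n) auto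
  have init: "init_stack n ain = Stk [init_stack (n-1) ain]" unfolding nm using init_Suc by simp
  have wfi: "wf_stack \<Sigma> (n-1) (init_stack (n-1) ain)" using wf_init[OF hop(2)] .
  show ?thesis
  proof
    assume U: "Unb a (lang_P n R qin ain qf)"
    show "Unb a (lang_hat n Q \<Sigma> R a qin ain qf)" unfolding Unb_def
    proof
      fix N
      obtain u where u: "u \<in> lang_P n R qin ain qf" "2 ^ N \<le> count_list u a"
        using U[unfolded Unb_def, rule_format, of "2 ^ N"] by blast
      then have "hrun n R (qin, Stk [init_stack (n-1) ain]) u (qf, Stk [])"
        using init by (simp add: lang_P_def)
      then obtain k where "hrunk n R k (qin, Stk [init_stack (n-1) ain]) u (qf, Stk [])"
        using hrun_hrunk by blast
      then have "\<exists>u' w2. trun (n-1) (hat_rules n Q \<Sigma> R a) (Some (qin, qf), init_stack (n-1) ain) u' (None, w2)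
        \<and> count_list u a < 2 ^ count_list u' a"
        apply (rule P_to_hat[rotated 3])
           apply (rule wfi)
          apply (rule n1)
         apply (rule RQ, assumption)
        apply (rule assms(3), assumption+)
        done
      then obtain u' w2 where T: "trun (n-1) (hat_rules n Q \<Sigma> R a) (Some (qin, qf), init_stack (n-1) ain) u' (None, w2)"
        "count_list u a < 2 ^ count_list u' a" by blast
      have "(2::nat) ^ N < 2 ^ count_list u' a" using u(2) T(2) by linarith
      then have "N < count_list u' a" using power_less_imp_less_exp[of 2 N] by simp
      moreover have "u' \<in> lang_hat n Q \<Sigma> R a qin ain qf" using T(1) by (auto simp: lang_hat_def)
      ultimately show "\<exists>w\<in>lang_hat n Q \<Sigma> R a qin ain qf. N \<le> count_list w a"
        by (intro bexI[of _ u']) simp_all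
    qed
  next
    assume U: "Unb a (lang_hat n Q \<Sigma> R a qin ain qf)"
    show "Unb a (lang_P n R qin ain qf)" unfolding Unb_def
    proof
      fix N
      obtain u w2 where u: "trun (n-1) (hat_rules n Q \<Sigma> R a) (Some (qin, qf), init_stack (n-1) ain) u (None, w2)"
        "N \<le> count_list u a"
        using U[unfolded Unb_def, rule_format, of N] unfolding lang_hat_def by blast
      have "\<exists>u'. hrun n R (qin, Stk [snd (Some (qin, qf), init_stack (n-1) ain)]) u' (qf, Stk []) \<and> count_list u a \<le> count_list u' a"
        apply (rule hat_to_P[rotated 3])
             apply (rule u(1))
            apply simp
           apply simp
          apply (rule n1)
         apply (rule RQ, assumption)
        apply (rule assms(3), assumption+)
        done
      then obtain u' where "hrun n R (qin, Stk [init_stack (n-1) ain]) u' (qf, Stk [])" "count_list u a \<le> count_list u' a"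
        by auto
      then show "\<exists>w\<in>lang_P n R qin ain qf. N \<le> count_list w a"
        using u(2) init unfolding lang_P_def by (intro bexI[of _ u']) simp_all
    qed
  qed
qed

end
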